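(* Let $Y$ be a compact metric space and $X:=Z\times Y$. Then every homeomorphism $\alpha\in\mathcal{O}(\zeta\times\mathrm{id})\subset\mathrm{Homeo}(X)$ has mean dimension zero.
   Context: $(Z,\zeta)$ is the point-like minimal system of Deeley–Putnam–Strung associated to a minimal diffeomorphism of an odd-dimensional sphere $S^d$, $d\ge3$: $Z$ is an infinite compact connected metric space of finite covering dimension with the $K$-theory and Čech cohomology of a point, and $\zeta$ is a minimal homeomorphism of $Z$. $\mathcal{O}(\zeta\times\mathrm{id})=\{G^{-1}\circ(\zeta\times\mathrm{id})\circ G : G\in\mathrm{Homeo}(X)\}$. Mean dimension: for a finite open cover $\mathcal{U}$, $\mathrm{ord}(\mathcal{U})=\max_x\sum_{U\in\mathcal{U}}\chi_U(x)-1$, $\mathcal{D}(\mathcal{U})=\min$ of $\mathrm{ord}(\mathcal{V})$ over finite open refinements $\mathcal{V}$ of $\mathcal{U}$, $\mathcal{D}(\mathcal{U},\alpha,n)=\mathcal{D}(\mathcal{U}\vee\alpha^{-1}\mathcal{U}\vee\cdots\vee\alpha^{-n+1}\mathcal{U})$, $\mathcal{D}(\mathcal{U},\alpha)=\lim_n\mathcal{D}(\mathcal{U},\alpha,n)/n$, and $\mathrm{mdim}(\alpha)=\sup_{\mathcal{U}}\mathcal{D}(\mathcal{U},\alpha)$. *)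

theory Defs
  imports "HOL-Analysis.Analysis"
begin

definition finite_open_cover :: "'a::topological_space set set \<Rightarrow> bool" where
  "finite_open_cover \<U> \<longleftrightarrow> finite \<U> \<and> (\<forall>U\<in>\<U>. open U) \<and> \<Union>\<U> = UNIV"

definition refines :: "'a set set \<Rightarrow> 'a set set \<Rightarrow> bool" where
  "refines \<V> \<U> \<longleftrightarrow> (\<forall>V\<in>\<V>. \<exists>U\<in>\<U>. V \<subseteq> U)"

text \<open>ord(U) = max_x sum_{U} chi_U(x) - 1 (for a cover, every point lies in at least one member).\<close>
definition cover_ord :: "'a set set \<Rightarrow> nat" where
  "cover_ord \<U> = (MAX x\<in>(UNIV::'a set). card {U\<in>\<U>. x \<in> U}) - 1"

definition cover_D :: "'a::topological_space set set \<Rightarrow> nat" where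
  "cover_D \<U> = (LEAST k. \<exists>\<V>. finite_open_cover \<V> \<and> refines \<V> \<U> \<and> cover_ord \<V> = k)"

definition cover_join :: "'a set set \<Rightarrow> 'a set set \<Rightarrow> 'a set set" where
  "cover_join \<U> \<V> = {U \<inter> V | U V. U \<in> \<U> \<and> V \<in> \<V>}"

definition cover_preimage :: "('a \<Rightarrow> 'a) \<Rightarrow> 'a set set \<Rightarrow> 'a set set" where
  "cover_preimage f \<U> = (\<lambda>U. f -` U) ` \<U>"

fun iter_join :: "('a \<Rightarrow> 'a) \<Rightarrow> 'a set set \<Rightarrow> nat \<Rightarrow> 'a set set" where
  "iter_join f \<U> 0 = {UNIV}"
| "iter_join f \<U> (Suc n) = cover_join (iter_join f \<U> n) (cover_preimage (f ^^ n) \<U>)"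

definition cover_D_dyn :: "'a::topological_space set set \<Rightarrow> ('a \<Rightarrow> 'a) \<Rightarrow> nat \<Rightarrow> nat" where
  "cover_D_dyn \<U> f n = cover_D (iter_join f \<U> n)"

definition cover_mdim :: "'a::topological_space set set \<Rightarrow> ('a \<Rightarrow> 'a) \<Rightarrow> real" where
  "cover_mdim \<U> f = lim (\<lambda>n. real (cover_D_dyn \<U> f n) / real n)"

definition mdim :: "('a::topological_space \<Rightarrow> 'a) \<Rightarrow> ereal" where
  "mdim f = (SUP \<U>\<in>{\<U>. finite_open_cover \<U>}. ereal (cover_mdim \<U> f))"

definition finite_covering_dim :: "'a::topological_space itself \<Rightarrow> bool" where
  "finite_covering_dim _ \<longleftrightarrow>
     (\<exists>n. \<forall>\<U>::'a set set. finite_open_cover \<U> \<longrightarrow> cover_D \<U> \<le> n)"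

definition minimal_homeo :: "('a::topological_space \<Rightarrow> 'a) \<Rightarrow> bool" where
  "minimal_homeo f \<longleftrightarrow> (\<exists>g. homeomorphism UNIV UNIV f g) \<and>
     (\<forall>A. closed A \<and> f ` A = A \<longrightarrow> A = {} \<or> A = UNIV)"

end

theory Submission
  imports Defs
begin

lemma iter_join_mem:
  "W \<in> iter_join f \<U> n \<longleftrightarrow> (\<exists>c. (\<forall>j<n. c j \<in> \<U>) \<and> W = (\<Inter>j<n. (f^^j) -` c j))"
proof (induction n arbitrary: W)
  case 0
  then show ?case by simp
next
  case (Suc n)
  show ?case
  proof
    assume "W \<in> iter_join f \<U> (Suc n)"
    then obtain W' u where W': "W' \<in> iter_join f \<U> n" and u: "u \<in> \<U>" and W: "W = W' \<inter> (f^^n) -` u"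
      by (auto simp: cover_join_def cover_preimage_def)
    from W' Suc.IH obtain c where c: "\<forall>j<n. c j \<in> \<U>" "W' = (\<Inter>j<n. (f^^j) -` c j)" by blast
    define d where "d = c(n:=u)"
    have "\<forall>j<Suc n. d j \<in> \<U>" using c u by (auto simp: d_def less_Suc_eq)
    moreover have "W = (\<Inter>j<Suc n. (f^^j) -` d j)"
      using c W by (auto simp: d_def lessThan_Suc)
    ultimately show "\<exists>c. (\<forall>j<Suc n. c j \<in> \<U>) \<and> W = (\<Inter>j<Suc n. (f^^j) -` c j)" by blast
  next
    assume "\<exists>c. (\<forall>j<Suc n. c j \<in> \<U>) \<and> W = (\<Inter>j<Suc n. (f^^j) -` c j)"
    then obtain c where c: "\<forall>j<Suc n. c j \<in> \<U>" "W = (\<Inter>j<Suc n. (f^^j) -` c j)" by blast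
    have "(\<Inter>j<n. (f^^j) -` c j) \<in> iter_join f \<U> n" unfolding Suc.IH by (rule exI[of _ c]) (use c(1) in auto)
    moreover have "W = (\<Inter>j<n. (f^^j) -` c j) \<inter> (f^^n) -` c n" using c(2) by (auto simp: lessThan_Suc)
    ultimately show "W \<in> iter_join f \<U> (Suc n)"
      using c(1) by (auto simp: cover_join_def cover_preimage_def)
  qed
qed

lemma cont_iter: "continuous_on UNIV (f::'a::topological_space \<Rightarrow> 'a) \<Longrightarrow> continuous_on UNIV (f^^n)"
  proof (induction n)
  case (Suc n)
  have "continuous_on UNIV (f \<circ> (f^^n))"
    by (rule continuous_on_compose) (use Suc in \<open>auto intro: continuous_on_subset\<close>)
  then show ?case by (simp only: funpow.simps)
qed simp

lemma iter_join_cover: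
  assumes f: "continuous_on UNIV f" and U: "finite_open_cover \<U>"
  shows "finite_open_cover (iter_join f \<U> n)"
proof (induction n)
  case 0
  then show ?case by (simp add: finite_open_cover_def)
next
  case (Suc n)
  have cn: "continuous_on UNIV (f^^n)" using cont_iter[OF f] .
  have fin: "finite (iter_join f \<U> (Suc n))"
  proof -
    have "iter_join f \<U> (Suc n) = (\<lambda>(a,b). a \<inter> b) ` (iter_join f \<U> n \<times> cover_preimage (f^^n) \<U>)"
      by (auto simp: cover_join_def)
    moreover have "finite (cover_preimage (f^^n) \<U>)" using U by (simp add: cover_preimage_def finite_open_cover_def)
    ultimately show ?thesis using Suc by (simp add: finite_open_cover_def)
  qed
  have opn: "open W" if "W \<in> iter_join f \<U> (Suc n)" for W
  proof -
    from that obtain a u where a: "a \<in> iter_join f \<U> n" and u: "u \<in> \<U>" and W: "W = a \<inter> (f^^n) -` u"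
      by (auto simp: cover_join_def cover_preimage_def)
    have "open a" using a Suc by (simp add: finite_open_cover_def)
    moreover have "open ((f^^n) -` u)" using cn u U
      by (metis finite_open_cover_def open_vimage)
    ultimately show ?thesis using W by auto
  qed
  have cov: "\<Union>(iter_join f \<U> (Suc n)) = UNIV"
  proof (rule set_eqI, rule iffI)
    fix x :: 'a
    have "x \<in> \<Union>(iter_join f \<U> n)" using Suc by (simp add: finite_open_cover_def)
    then obtain a where a: "a \<in> iter_join f \<U> n" "x \<in> a" by blast
    have "(f^^n) x \<in> \<Union>\<U>" using U by (simp add: finite_open_cover_def)
    then obtain u where u: "u \<in> \<U>" "(f^^n) x \<in> u" by blast
    have "a \<inter> (f^^n) -` u \<in> iter_join f \<U> (Suc n)" using a u by (auto simp: cover_join_def cover_preimage_def)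
    then show "x \<in> \<Union>(iter_join f \<U> (Suc n))" using a u by blast
  qed simp
  show ?case using fin opn cov by (simp add: finite_open_cover_def)
qed

lemma card_le_ord:
  assumes "finite \<V>"
  shows "card {V\<in>\<V>. x \<in> V} \<le> cover_ord \<V> + 1"
proof -
  have "range (\<lambda>x. card {V\<in>\<V>. x \<in> V}) \<subseteq> {..card \<V>}"
    using assms by (auto intro: card_mono)
  then have "finite (range (\<lambda>x. card {V\<in>\<V>. x \<in> V}))" using finite_subset by blast
  then have "card {V\<in>\<V>. x \<in> V} \<le> (MAX x\<in>(UNIV::'a set). card {V\<in>\<V>. x \<in> V})" by simp
  then show ?thesis unfolding cover_ord_def by linarith
qed

lemma ord_le:
  assumes "finite \<V>" "\<And>x. card {V\<in>\<V>. x \<in> V} \<le> K"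
  shows "cover_ord \<V> \<le> K"
proof -
  have "range (\<lambda>x. card {V\<in>\<V>. x \<in> V}) \<subseteq> {..card \<V>}"
    using assms by (auto intro: card_mono)
  then have "finite (range (\<lambda>x. card {V\<in>\<V>. x \<in> V}))" using finite_subset by blast
  then have "(MAX x\<in>(UNIV::'a set). card {V\<in>\<V>. x \<in> V}) \<le> K" using assms(2) by simp
  then show ?thesis unfolding cover_ord_def by linarith
qed

lemma cover_D_witness:
  assumes "finite_open_cover \<U>"
  obtains \<V> where "finite_open_cover \<V>" "refines \<V> \<U>" "cover_ord \<V> = cover_D \<U>"
proof -
  have "refines \<U> \<U>" by (auto simp: refines_def)
  then have ex: "\<exists>k. \<exists>\<V>. finite_open_cover \<V> \<and> refines \<V> \<U> \<and> cover_ord \<V> = k" using assms by blast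
  show ?thesis using LeastI_ex[OF ex] that unfolding cover_D_def by blast
qed

lemma cover_D_le:
  assumes "finite_open_cover \<V>" "refines \<V> \<U>"
  shows "cover_D \<U> \<le> cover_ord \<V>"
  unfolding cover_D_def by (rule Least_le) (use assms in blast)

theorem lemma3p2:
  fixes \<zeta> :: "'z::metric_space \<Rightarrow> 'z"
    and G Ginv :: "'z \<times> 'y::metric_space \<Rightarrow> 'z \<times> 'y"
  assumes Z_compact: "compact (UNIV :: 'z set)"
    and Z_connected: "connected (UNIV :: 'z set)"
    and Z_infinite: "infinite (UNIV :: 'z set)"
    and Z_findim: "finite_covering_dim TYPE('z)"
    and zeta_minimal: "minimal_homeo \<zeta>"
    and Y_compact: "compact (UNIV :: 'y set)"
    and G_homeo: "homeomorphism UNIV UNIV G Ginv"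
  shows "mdim (Ginv \<circ> (\<lambda>(z, y). (\<zeta> z, y)) \<circ> G) = 0"
proof -
  define T :: "'z \<times> 'y \<Rightarrow> 'z \<times> 'y" where "T = (\<lambda>(z, y). (\<zeta> z, y))"
  define f where "f = Ginv \<circ> T \<circ> G"
  obtain g where "homeomorphism UNIV UNIV \<zeta> g" using zeta_minimal by (auto simp: minimal_homeo_def)
  then have zc: "continuous_on UNIV \<zeta>" by (simp add: homeomorphism_def)
  have Gc: "continuous_on UNIV G" and Gic: "continuous_on UNIV Ginv"
    and GG: "\<And>x. G (Ginv x) = x" and GiG: "\<And>x. Ginv (G x) = x"
    using G_homeo by (auto simp: homeomorphism_def)
  obtain N where N: "\<And>\<U>::'z set set. finite_open_cover \<U> \<Longrightarrow> cover_D \<U> \<le> N"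
    using Z_findim unfolding finite_covering_dim_def by blast
  have fpow: "(f^^j) x = Ginv ((\<zeta>^^j) (fst (G x)), snd (G x))" for j x
  proof (induction j)
    case 0
    then show ?case by (simp add: GiG)
  next
    case (Suc j)
    then show ?case by (simp add: f_def T_def GG)
  qed
  have main: "cover_mdim \<U> f = 0" if U: "finite_open_cover \<U>" for \<U>
  proof -
    define \<U>' where "\<U>' = (\<lambda>u. Ginv -` u) ` \<U>"
    have HB1: "compact (UNIV :: ('z \<times> 'y) set)"
      using compact_Times[OF Z_compact Y_compact] by simp
    have HB2: "(UNIV :: ('z \<times> 'y) set) \<subseteq> \<Union>\<U>'"
    proof
      fix p :: "'z \<times> 'y"
      have "Ginv p \<in> \<Union>\<U>" using U by (simp add: finite_open_cover_def)
      then show "p \<in> \<Union>\<U>'" by (auto simp: \<U>'_def)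
    qed
    have HB3: "\<And>B. B \<in> \<U>' \<Longrightarrow> open B"
      using U Gic by (auto simp: \<U>'_def finite_open_cover_def intro: open_vimage)
    have "\<exists>e>0. \<forall>p. \<exists>G'\<in>\<U>'. ball p e \<subseteq> G'"
      by (rule Heine_Borel_lemma[OF HB1 HB2 HB3]) auto
    then obtain e where e: "0 < e" "\<And>p. p \<in> UNIV \<Longrightarrow> \<exists>G'\<in>\<U>'. ball p e \<subseteq> G'"
      by blast
    define r where "r = e / 2"
    have r: "r > 0" using e by (simp add: r_def)
    obtain \<A> where A: "\<A> \<subseteq> range (\<lambda>a::'z. ball a r)" "finite \<A>" "(UNIV::'z set) \<subseteq> \<Union>\<A>"
      by (rule compactE[OF Z_compact, of "range (\<lambda>a. ball a r)"]) (use r in auto)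
    obtain \<B> where B: "\<B> \<subseteq> range (\<lambda>b::'y. ball b r)" "finite \<B>" "(UNIV::'y set) \<subseteq> \<Union>\<B>"
      by (rule compactE[OF Y_compact, of "range (\<lambda>b. ball b r)"]) (use r in auto)
    have box: "\<exists>u\<in>\<U>. A \<times> B' \<subseteq> Ginv -` u" if AB: "A \<in> \<A>" "B' \<in> \<B>" for A B'
    proof -
      obtain a b where ab: "A = ball a r" "B' = ball b r" using AB A(1) B(1) by blast
      obtain G' where G': "G' \<in> \<U>'" "ball (a, b) e \<subseteq> G'" using e(2)[OF UNIV_I] by blast
      obtain u where u: "u \<in> \<U>" "G' = Ginv -` u" using G' unfolding \<U>'_def by blast
      have "A \<times> B' \<subseteq> ball (a, b) e"
      proof
        fix p assume "p \<in> A \<times> B'"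
        then obtain z y where p: "p = (z, y)" "dist a z < r" "dist b y < r" using ab by auto
        have "dist (a, b) (z, y) = sqrt ((dist a z)\<^sup>2 + (dist b y)\<^sup>2)" by (simp add: dist_Pair_Pair)
        also have "\<dots> \<le> \<bar>dist a z\<bar> + \<bar>dist b y\<bar>" by (rule sqrt_sum_squares_le_sum_abs)
        also have "\<dots> < e" using p by (simp add: r_def)
        finally show "p \<in> ball (a, b) e" using p by simp
      qed
      then show ?thesis using G' u by blast
    qed
    have Afoc: "finite_open_cover \<A>" using A by (auto simp: finite_open_cover_def)
    define K where "K = (N + 1) * card \<B>"
    have bound: "cover_D_dyn \<U> f n \<le> K" for n
    proof -
      have FC: "finite_open_cover (iter_join \<zeta> \<A> n)" by (rule iter_join_cover[OF zc Afoc])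
      obtain \<V> where V: "finite_open_cover \<V>" "refines \<V> (iter_join \<zeta> \<A> n)"
        "cover_ord \<V> = cover_D (iter_join \<zeta> \<A> n)"
        by (rule cover_D_witness[OF FC])
      have VN: "cover_ord \<V> \<le> N" using V(3) N[OF FC] by simp
      define \<W> where "\<W> = (\<lambda>(V, B'). G -` (V \<times> B')) ` (\<V> \<times> \<B>)"
      have Wfin: "finite \<W>" using V(1) B(2) by (simp add: \<W>_def finite_open_cover_def)
      have Wopen: "open W" if "W \<in> \<W>" for W
      proof -
        obtain V' B' where "V' \<in> \<V>" "B' \<in> \<B>" "W = G -` (V' \<times> B')" using \<open>W \<in> \<W>\<close> by (auto simp: \<W>_def)
        moreover have "open V'" using \<open>V' \<in> \<V>\<close> V(1) by (simp add: finite_open_cover_def)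
        moreover have "open B'"
        proof -
          have "B' \<in> range (\<lambda>b. ball b r)" using \<open>B' \<in> \<B>\<close> B(1) by blast
          then obtain b where "B' = ball b r" by blast
          then show ?thesis by (simp only: open_ball)
        qed
        ultimately show ?thesis using Gc by (metis open_vimage open_Times)
      qed
      have Wcov: "\<Union>\<W> = UNIV"
      proof (rule set_eqI, rule iffI)
        fix x
        have "fst (G x) \<in> \<Union>\<V>" using V(1) by (simp add: finite_open_cover_def)
        then obtain V' where V': "V' \<in> \<V>" "fst (G x) \<in> V'" by blast
        have "snd (G x) \<in> \<Union>\<B>" by (rule subsetD[OF B(3)]) simp
        then obtain B' where B': "B' \<in> \<B>" "snd (G x) \<in> B'" by blast
        have "x \<in> G -` (V' \<times> B')" using V' B' by (simp add: mem_Times_iff)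
        moreover have "G -` (V' \<times> B') \<in> \<W>"
          unfolding \<W>_def by (rule image_eqI[where x="(V', B')"]) (use V' B' in auto)
        ultimately have "x \<in> G -` (V' \<times> B')" "G -` (V' \<times> B') \<in> \<W>" by blast+
        then show "x \<in> \<Union>\<W>" by blast
      qed simp
      have Wfoc: "finite_open_cover \<W>" using Wfin Wopen Wcov by (simp add: finite_open_cover_def)
      have Wref: "refines \<W> (iter_join f \<U> n)"
        unfolding refines_def
      proof
        fix W assume "W \<in> \<W>"
        then obtain V' B' where VB: "V' \<in> \<V>" "B' \<in> \<B>" "W = G -` (V' \<times> B')" by (auto simp: \<W>_def)
        obtain W' where W': "W' \<in> iter_join \<zeta> \<A> n" "V' \<subseteq> W'" using V(2) VB(1) by (auto simp: refines_def)
        obtain c where c: "\<forall>j<n. c j \<in> \<A>" "W' = (\<Inter>j<n. (\<zeta>^^j) -` c j)"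
          using W'(1) unfolding iter_join_mem by blast
        have "\<forall>j. \<exists>u. j < n \<longrightarrow> u \<in> \<U> \<and> c j \<times> B' \<subseteq> Ginv -` u"
          using box c(1) VB(2) by blast
        from choice[OF this] obtain d where d: "\<forall>j. j < n \<longrightarrow> d j \<in> \<U> \<and> c j \<times> B' \<subseteq> Ginv -` d j"
          by blast
        have "(\<Inter>j<n. (f^^j) -` d j) \<in> iter_join f \<U> n"
          unfolding iter_join_mem by (rule exI[of _ d]) (use d in auto)
        moreover have "W \<subseteq> (\<Inter>j<n. (f^^j) -` d j)"
        proof
          fix x assume "x \<in> W"
          then have x: "fst (G x) \<in> V'" "snd (G x) \<in> B'" using VB(3) by (auto simp: mem_Times_iff)
          show "x \<in> (\<Inter>j<n. (f^^j) -` d j)"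
          proof
            fix j assume j0: "j \<in> {..<n}"
            then have j: "j < n" by simp
            have "(\<zeta>^^j) (fst (G x)) \<in> c j" using x(1) W'(2) c(2) j0 by blast
            then have "((\<zeta>^^j) (fst (G x)), snd (G x)) \<in> c j \<times> B'" using x(2) by simp
            moreover have "c j \<times> B' \<subseteq> Ginv -` d j" using d j by blast
            ultimately have "Ginv ((\<zeta>^^j) (fst (G x)), snd (G x)) \<in> d j" by blast
            then show "x \<in> (f^^j) -` d j" by (simp add: fpow)
          qed
        qed
        ultimately show "\<exists>U\<in>iter_join f \<U> n. W \<subseteq> U" by blast
      qed
      have Word: "cover_ord \<W> \<le> K"
      proof (rule ord_le[OF Wfin])
        fix x
        define S where "S = {V'\<in>\<V>. fst (G x) \<in> V'}"
        have fV: "finite \<V>" using V(1) by (simp add: finite_open_cover_def)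
        have "{W\<in>\<W>. x \<in> W} \<subseteq> (\<lambda>(V, B'). G -` (V \<times> B')) ` (S \<times> \<B>)"
          by (auto simp: \<W>_def S_def mem_Times_iff)
        moreover have "finite (S \<times> \<B>)" using fV B(2) by (simp add: S_def)
        ultimately have "card {W\<in>\<W>. x \<in> W} \<le> card ((\<lambda>(V, B'). G -` (V \<times> B')) ` (S \<times> \<B>))"
          by (intro card_mono) auto
        also have "\<dots> \<le> card (S \<times> \<B>)" by (rule card_image_le) fact
        also have "\<dots> = card S * card \<B>" by (simp add: card_cartesian_product)
        also have "\<dots> \<le> (N + 1) * card \<B>"
        proof -
          have "card S \<le> cover_ord \<V> + 1" unfolding S_def by (rule card_le_ord[OF fV])
          then have "card S \<le> N + 1" using VN by linarith
          then show ?thesis by (rule mult_right_mono) simp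
        qed
        finally show "card {W\<in>\<W>. x \<in> W} \<le> K" by (simp add: K_def)
      qed
      have "cover_D (iter_join f \<U> n) \<le> cover_ord \<W>" by (rule cover_D_le[OF Wfoc Wref])
      then show ?thesis using Word by (simp add: cover_D_dyn_def)
    qed
    have "(\<lambda>n. real (cover_D_dyn \<U> f n) / real n) \<longlonglongrightarrow> 0"
    proof (rule tendsto_sandwich[of "\<lambda>n. 0" _ _ "\<lambda>n. real K / real n"])
      show "\<forall>\<^sub>F n in sequentially. 0 \<le> real (cover_D_dyn \<U> f n) / real n" by simp
      show "\<forall>\<^sub>F n in sequentially. real (cover_D_dyn \<U> f n) / real n \<le> real K / real n"
        by (intro always_eventually allI divide_right_mono) (use bound in auto)
      show "(\<lambda>n. 0::real) \<longlonglongrightarrow> 0" by simp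
      show "(\<lambda>n. real K / real n) \<longlonglongrightarrow> 0" by (rule lim_const_over_n)
    qed
    then show ?thesis unfolding cover_mdim_def by (rule limI)
  qed
  have ne: "{\<U>::('z \<times> 'y) set set. finite_open_cover \<U>} \<noteq> {}"
  proof -
    have "{UNIV} \<in> {\<U>::('z \<times> 'y) set set. finite_open_cover \<U>}" by (simp add: finite_open_cover_def)
    then show ?thesis by blast
  qed
  have img: "(\<lambda>\<U>. ereal (cover_mdim \<U> f)) ` {\<U>. finite_open_cover \<U>} = {0}"
    using ne main by auto
  have "mdim f = 0" unfolding mdim_def img by simp
  then show ?thesis by (simp add: f_def T_def)
qed

end
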